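(* Let $\mathbb{F}$ be any field, and let $f\in\mathbb{F}[x_1,\dots,x_n]$ be computed by a diagonal depth-4 circuit $\Phi=\sum_{i=1}^k\Psi_i$ with $\Psi_i=\prod_jP_{i,j}^{e_{i,j}}$ and $P_{i,j}=\sum_{m=1}^ng_{i,j,m}(x_m)$ ($g_{i,j,m}$ univariate). Let $\mathrm{sdeg}(\Phi)=\max_i\sum_je_{i,j}\deg(P_{i,j})$. Then $f$ is computed by a read-once oblivious ABP with variable order $x_1<\dots<x_n$, of depth $n$ and width $\le k\cdot\max_{i}|\vec e_i|_\times$, in which every edge label is a univariate polynomial of degree $\le\mathrm{sdeg}(\Phi)$.
   Context: $\vec e_i=(e_{i,j})_j$ and $|\vec e_i|_\times=\prod_j(1+e_{i,j})$. A read-once oblivious ABP of depth $n$ with variable order $x_1<\dots<x_n$ is a directed acyclic graph with vertices in layers $0,\dots,n$, a single source in layer 0, a single sink in layer $n$, and edges only from layer $j-1$ to layer $j$ each labeled by a univariate polynomial in $x_j$; it computes the sum over source-sink paths of the product of labels; its width is the maximum number of vertices in a layer. *)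

theory Defs
  imports "HOL-Library.Poly_Mapping" "HOL-Computational_Algebra.Polynomial"
begin

text \<open>Multivariate polynomials over 'a in variables x_0, x_1, ... (indexed by nat):
  finitely supported maps from monomials (exponent vectors nat =>0 nat) to coefficients,
  with the convolution ring structure of Poly_Mapping.\<close>
type_synonym 'a mpoly = "(nat \<Rightarrow>\<^sub>0 nat) \<Rightarrow>\<^sub>0 'a"

definition upoly_in :: "nat \<Rightarrow> 'a::comm_ring_1 poly \<Rightarrow> 'a mpoly" where
  "upoly_in m p = (\<Sum>d\<le>degree p. Poly_Mapping.single (Poly_Mapping.single m d) (coeff p d))"

definition mdeg :: "'a::zero mpoly \<Rightarrow> nat" where
  "mdeg p = Max (insert 0 ((\<lambda>mon. \<Sum>v\<in>Poly_Mapping.keys mon. Poly_Mapping.lookup mon v) ` Poly_Mapping.keys p))"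

text \<open>A diagonal depth-4 circuit: a list of k summands Psi_i; each summand is a list of
  factors (e_ij, g_ij) standing for P_ij^e_ij with P_ij = sum_{m<n} g_ij m (x_m).\<close>
type_synonym 'a d4circuit = "(nat \<times> (nat \<Rightarrow> 'a poly)) list list"

definition d4_factor :: "nat \<Rightarrow> (nat \<Rightarrow> 'a::comm_ring_1 poly) \<Rightarrow> 'a mpoly" where
  "d4_factor n g = (\<Sum>m<n. upoly_in m (g m))"

definition d4_eval :: "nat \<Rightarrow> 'a::comm_ring_1 d4circuit \<Rightarrow> 'a mpoly" where
  "d4_eval n C = (\<Sum>Psi\<leftarrow>C. \<Prod>(e, g)\<leftarrow>Psi. d4_factor n g ^ e)"

definition d4_sdeg :: "nat \<Rightarrow> 'a::comm_ring_1 d4circuit \<Rightarrow> nat" where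
  "d4_sdeg n C = Max (insert 0 (set (map (\<lambda>Psi. \<Sum>(e, g)\<leftarrow>Psi. e * mdeg (d4_factor n g)) C)))"

text \<open>|e_i|_x = prod_j (1 + e_ij), and its maximum over the summands.\<close>
definition exp_prod :: "(nat \<times> 'b) list \<Rightarrow> nat" where
  "exp_prod Psi = (\<Prod>(e, g)\<leftarrow>Psi. 1 + e)"

definition d4_max_exp_prod :: "'b d4circuit \<Rightarrow> nat" where
  "d4_max_exp_prod C = Max (insert 0 (set (map exp_prod C)))"

text \<open>Read-once oblivious ABP of depth n with variable order x_0 < ... < x_(n-1):
  layer j (0 \<le> j \<le> n) has vertices {0..<w j}; the edge from vertex u in layer j to
  vertex v in layer j+1 (j < n) carries the univariate label L j u v, read as a polynomial
  in x_j (a zero label means "no edge"). Source = vertex 0 of layer 0, sink = vertex 0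
  of layer n.\<close>
definition abp_paths :: "nat \<Rightarrow> (nat \<Rightarrow> nat) \<Rightarrow> nat list set" where
  "abp_paths n w = {ps. length ps = Suc n \<and> (\<forall>j\<le>n. ps ! j < w j) \<and> ps ! 0 = 0 \<and> ps ! n = 0}"

definition abp_eval :: "nat \<Rightarrow> (nat \<Rightarrow> nat) \<Rightarrow> (nat \<Rightarrow> nat \<Rightarrow> nat \<Rightarrow> 'a::comm_ring_1 poly) \<Rightarrow> 'a mpoly" where
  "abp_eval n w L = (\<Sum>ps\<in>abp_paths n w. \<Prod>j<n. upoly_in j (L j (ps ! j) (ps ! Suc j)))"

definition abp_width :: "nat \<Rightarrow> (nat \<Rightarrow> nat) \<Rightarrow> nat" where
  "abp_width n w = Max (w ` {..n})"

end

theory Submission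
  imports Defs
begin


definition cst :: "'a::comm_ring_1 \<Rightarrow> 'a mpoly" where "cst c = Poly_Mapping.single 0 c"
definition xv :: "nat \<Rightarrow> 'a::comm_ring_1 mpoly" where "xv m = Poly_Mapping.single (Poly_Mapping.single m 1) 1"

lemma xv_pow: "xv m ^ d = Poly_Mapping.single (Poly_Mapping.single m d) (1::'a::comm_ring_1)"
  by (induction d) (simp_all add: xv_def mult_single single_add[symmetric] add.commute)

lemma cst_nz: "c \<noteq> 0 \<Longrightarrow> cst c \<noteq> 0"
  unfolding cst_def by (metis lookup_single_eq lookup_zero)

lemma cst_mult: "cst (a*b) = cst a * cst b" unfolding cst_def by (simp add: mult_single)
lemma cst_add: "cst (a+b) = cst a + cst b" unfolding cst_def by (simp add: single_add)

lemma map_poly_add_cst: "map_poly cst (p+q) = map_poly cst p + map_poly cst q"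
  by (intro poly_eqI) (simp add: coeff_map_poly cst_def single_add)

lemma map_poly_mult_cst: "map_poly cst (p*q) = map_poly cst p * (map_poly cst q :: 'a::comm_ring_1 mpoly poly)"
proof (induction p)
  case 0 then show ?case by simp
next
  case (pCons a p)
  have "map_poly cst (pCons a p * q) = map_poly cst (smult a q + pCons 0 (p*q))" by simp
  also have "\<dots> = smult (cst a) (map_poly cst q) + pCons 0 (map_poly cst p * map_poly cst q)"
  proof -
    have c0: "cst 0 = (0::'a mpoly)" by (simp add: cst_def)
    have "map_poly cst (smult a q) = smult (cst a) (map_poly cst q)"
      by (rule map_poly_smult) (simp_all add: c0 cst_mult)
    moreover have "map_poly cst (pCons 0 (p*q)) = pCons 0 (map_poly cst p * map_poly cst q)"
      by (simp add: map_poly_pCons c0 pCons.IH)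
    ultimately show ?thesis by (simp add: map_poly_add_cst)
  qed
  also have "\<dots> = map_poly cst (pCons a p) * map_poly cst q"
    by (simp add: map_poly_pCons cst_def)
  finally show ?case .
qed

lemma upoly_in_poly: "upoly_in m p = poly (map_poly cst p) (xv m)"
proof -
  have "degree (map_poly cst p) = degree p" by (rule degree_map_poly) (rule cst_nz)
  then show ?thesis
    by (simp add: upoly_in_def poly_altdef coeff_map_poly cst_def xv_pow mult_single)
qed

lemma upoly_in_mult: "upoly_in m (p*q) = upoly_in m p * upoly_in m q"
  by (simp add: upoly_in_poly map_poly_mult_cst)
lemma upoly_in_add: "upoly_in m (p+q) = upoly_in m p + upoly_in m q"
  by (simp add: upoly_in_poly map_poly_add_cst)
lemma upoly_in_0[simp]: "upoly_in m 0 = 0"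
  by (simp add: upoly_in_poly)
lemma upoly_in_1[simp]: "upoly_in m 1 = 1"
  by (simp add: upoly_in_poly cst_def)
lemma upoly_in_of_nat[simp]: "upoly_in m (of_nat k) = of_nat k"
  by (induction k) (simp_all add: upoly_in_add)
lemma upoly_in_pow: "upoly_in m (p^k) = upoly_in m p ^ k"
  by (induction k) (simp_all add: upoly_in_mult)



function abpV :: "nat \<Rightarrow> (nat\<Rightarrow>nat) \<Rightarrow> (nat\<Rightarrow>nat\<Rightarrow>nat\<Rightarrow>'a::comm_ring_1 poly) \<Rightarrow> nat \<Rightarrow> nat \<Rightarrow> 'a mpoly" where
"abpV n w L t u = (if n \<le> t then (if u = 0 then 1 else 0) else
    (\<Sum>v<w (Suc t). upoly_in t (L t u v) * abpV n w L (Suc t) v))"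
  by pat_completeness auto
termination by (relation "measure (\<lambda>(n,w,L,t,u). n - t)") auto

declare abpV.simps[simp del]

definition pth :: "nat \<Rightarrow> (nat\<Rightarrow>nat) \<Rightarrow> nat \<Rightarrow> nat \<Rightarrow> nat list set" where
"pth n w t u = {ps. length ps = Suc (n-t) \<and> (\<forall>k. 0<k \<and> k \<le> n-t \<longrightarrow> ps!k < w (t+k)) \<and> ps!0 = u \<and> ps!(n-t) = 0}"

lemma pth_step:
  assumes "n - t = Suc m"
  shows "pth n w t u = (\<lambda>(v,ps). u#ps) ` (SIGMA v:{..<w(Suc t)}. pth n w (Suc t) v)"
proof (intro set_eqI iffI)
  fix ps assume ps: "ps \<in> pth n w t u"
  then obtain ps' where ps': "ps = u # ps'"
    by (cases ps) (auto simp: pth_def)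
  have P: "length ps = Suc (Suc m)" "\<And>k. 0<k \<Longrightarrow> k \<le> Suc m \<Longrightarrow> ps!k < w (t+k)"
     "ps!(Suc m) = 0"
    using ps assms unfolding pth_def by auto
  have nm: "n - Suc t = m" using assms by simp
  have A: "ps'!k < w (Suc t + k)" if "k \<le> m" for k
    using P(2)[of "Suc k"] that unfolding ps' by simp
  have "ps' \<in> pth n w (Suc t) (ps'!0)" "ps'!0 < w (Suc t)"
    using P A A[of 0] unfolding ps' pth_def nm by auto
  then show "ps \<in> (\<lambda>(v,ps). u#ps) ` (SIGMA v:{..<w(Suc t)}. pth n w (Suc t) v)"
    using ps' by force
next
  fix ps assume "ps \<in> (\<lambda>(v,ps). u#ps) ` (SIGMA v:{..<w(Suc t)}. pth n w (Suc t) v)"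
  then obtain v ps' where ps': "ps = u # ps'" "v < w (Suc t)" "ps' \<in> pth n w (Suc t) v" by auto
  show "ps \<in> pth n w t u"
  proof -
    have nm: "n - Suc t = m" using assms by simp
    have P: "length ps' = Suc m" "\<And>k. 0<k \<Longrightarrow> k \<le> m \<Longrightarrow> ps'!k < w (Suc t+k)"
       "ps'!0 = v" "ps'!m = 0"
      using ps'(3) unfolding pth_def nm by auto
    have "(u#ps')!k < w (t+k)" if "0<k" "k \<le> Suc m" for k
    proof (cases k)
      case 0 then show ?thesis using that by simp
    next
      case (Suc k') then show ?thesis using that P ps'(2) by (cases "k' = 0") auto
    qed
    then show ?thesis using P assms unfolding ps'(1) pth_def by auto
  qed

qed

lemma abpV_paths:
  "t \<le> n \<Longrightarrow> finite (pth n w t u) \<and> abpV n w L t u =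
     (\<Sum>ps\<in>pth n w t u. \<Prod>k<n-t. upoly_in (t+k) (L (t+k) (ps!k) (ps!Suc k)))"
proof (induction "n - t" arbitrary: t u)
  case 0
  then have tn: "t = n" by simp
  have "pth n w t u = (if u = 0 then {[0]} else {})"
    using tn by (auto simp: pth_def length_Suc_conv)
  then show ?case using tn by (simp add: abpV.simps)
next
  case (Suc m)
  then have tn: "t < n" by simp
  have e: "pth n w t u = (\<lambda>(v,ps). u#ps) ` (SIGMA v:{..<w(Suc t)}. pth n w (Suc t) v)"
    using pth_step Suc(2) by metis
  have mm: "m = n - Suc t" using Suc.hyps(2) by simp
  have IH: "finite (pth n w (Suc t) v) \<and> abpV n w L (Suc t) v =
     (\<Sum>ps\<in>pth n w (Suc t) v. \<Prod>k<n-Suc t. upoly_in (Suc t+k) (L (Suc t+k) (ps!k) (ps!Suc k)))" for v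
    using Suc.hyps(1)[OF mm] tn by (simp add: Suc_leI)
  have inj: "inj_on (\<lambda>(v,ps). u#ps) (SIGMA v:{..<w(Suc t)}. pth n w (Suc t) v)"
  proof (rule inj_onI)
    fix x y assume "x \<in> (SIGMA v:{..<w(Suc t)}. pth n w (Suc t) v)"
      "y \<in> (SIGMA v:{..<w(Suc t)}. pth n w (Suc t) v)"
      "(\<lambda>(v,ps). u#ps) x = (\<lambda>(v,ps). u#ps) y"
    then show "x = y" unfolding pth_def by (cases x, cases y) auto
  qed
  have fin: "finite (SIGMA v:{..<w(Suc t)}. pth n w (Suc t) v)"
    using IH by auto
  have nm: "n - t = Suc (n - Suc t)" using tn by simp
  have "(\<Sum>ps\<in>pth n w t u. \<Prod>k<n-t. upoly_in (t+k) (L (t+k) (ps!k) (ps!Suc k)))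
     = (\<Sum>(v,ps)\<in>(SIGMA v:{..<w(Suc t)}. pth n w (Suc t) v).
          \<Prod>k<n-t. upoly_in (t+k) (L (t+k) ((u#ps)!k) ((u#ps)!Suc k)))"
    unfolding e by (subst sum.reindex[OF inj]) (simp add: case_prod_unfold)
  also have "\<dots> = (\<Sum>v<w(Suc t). \<Sum>ps\<in>pth n w (Suc t) v.
          upoly_in t (L t u v) * (\<Prod>k<n-Suc t. upoly_in (Suc t+k) (L (Suc t+k) (ps!k) (ps!Suc k))))"
  proof -
    have "(\<Sum>(v,ps)\<in>(SIGMA v:{..<w(Suc t)}. pth n w (Suc t) v).
          \<Prod>k<n-t. upoly_in (t+k) (L (t+k) ((u#ps)!k) ((u#ps)!Suc k))) =
      (\<Sum>(v,ps)\<in>(SIGMA v:{..<w(Suc t)}. pth n w (Suc t) v).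
          upoly_in t (L t u v) * (\<Prod>k<n-Suc t. upoly_in (Suc t+k) (L (Suc t+k) (ps!k) (ps!Suc k))))"
    proof (rule sum.cong[OF refl], clarify)
      fix v ps assume "ps \<in> pth n w (Suc t) v"
      then have "ps!0 = v" by (simp add: pth_def)
      then show "(\<Prod>k<n-t. upoly_in (t+k) (L (t+k) ((u#ps)!k) ((u#ps)!Suc k))) =
          upoly_in t (L t u v) * (\<Prod>k<n-Suc t. upoly_in (Suc t+k) (L (Suc t+k) (ps!k) (ps!Suc k)))"
        unfolding nm prod.lessThan_Suc_shift by simp
    qed
    also have "\<dots> = (\<Sum>v<w(Suc t). \<Sum>ps\<in>pth n w (Suc t) v.
          upoly_in t (L t u v) * (\<Prod>k<n-Suc t. upoly_in (Suc t+k) (L (Suc t+k) (ps!k) (ps!Suc k))))"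
      by (rule sum.Sigma[symmetric]) (use IH in auto)
    finally show ?thesis .
  qed
  also have "\<dots> = abpV n w L t u"
    using tn IH by (simp add: abpV.simps[of n w L t u] sum_distrib_left)
  finally show ?case using fin e by simp
qed

lemma abp_eval_V:
  assumes "w 0 > 0"
  shows "abp_eval n w L = abpV n w L 0 0"
proof -
  have "abp_paths n w = pth n w 0 0"
  proof (intro set_eqI iffI)
    fix ps assume "ps \<in> abp_paths n w" then show "ps \<in> pth n w 0 0"
      unfolding abp_paths_def pth_def by auto
  next
    fix ps assume a: "ps \<in> pth n w 0 0"
    have "ps ! j < w j" if "j \<le> n" for j
    proof (cases "j = 0")
      case True then show ?thesis using a assms by (simp add: pth_def)
    next
      case False then show ?thesis using a that by (simp add: pth_def)
    qed
    then show "ps \<in> abp_paths n w" using a unfolding abp_paths_def pth_def by auto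
  qed
  then show ?thesis using abpV_paths[of 0 n w 0 L] by (simp add: abp_eval_def)
qed



definition good :: "nat \<Rightarrow> (nat\<Rightarrow>nat) \<Rightarrow> (nat\<Rightarrow>nat\<Rightarrow>nat\<Rightarrow>'a::comm_ring_1 poly) \<Rightarrow> nat \<Rightarrow> nat \<Rightarrow> bool" where
"good n w L B D \<longleftrightarrow> w 0 = 1 \<and> w n = 1 \<and> (\<forall>t\<le>n. 1 \<le> w t \<and> w t \<le> B) \<and> (\<forall>t<n. \<forall>u v. degree (L t u v) \<le> D)"

lemma abpV_end: "abpV n w L n u = (if u = 0 then 1 else 0)"
  by (simp add: abpV.simps)
lemma abpV_step: "t < n \<Longrightarrow> abpV n w L t u = (\<Sum>v<w (Suc t). upoly_in t (L t u v) * abpV n w L (Suc t) v)"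
  by (simp add: abpV.simps[of n w L t u])

lemma const_abp:
  assumes "n \<ge> 1"
  shows "good n (\<lambda>_. 1) (\<lambda>_ _ _. 1::'a::comm_ring_1 poly) 1 0 \<and> abpV n (\<lambda>_. 1) (\<lambda>_ _ _. 1::'a poly) 0 0 = 1"
proof -
  have "t \<le> n \<Longrightarrow> abpV n (\<lambda>_. 1) (\<lambda>_ _ _. 1::'a poly) t 0 = 1" for t
  proof (induction "n - t" arbitrary: t)
    case 0 then show ?case by (simp add: abpV_end)
  next
    case (Suc m)
    then have "t < n" "m = n - Suc t" by auto
    then show ?case using Suc.hyps(1)[of "Suc t"] by (simp add: abpV_step)
  qed
  then show ?thesis by (simp add: good_def)
qed

definition Ssuf :: "nat \<Rightarrow> (nat \<Rightarrow> 'a::comm_ring_1 poly) \<Rightarrow> nat \<Rightarrow> 'a mpoly" where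
"Ssuf n g t = (\<Sum>m\<in>{t..<n}. upoly_in m (g m))"

definition pw_w :: "nat \<Rightarrow> nat \<Rightarrow> nat \<Rightarrow> nat" where
"pw_w n e t = (if 0 < t \<and> t < n then Suc e else 1)"
definition pw_L :: "nat \<Rightarrow> (nat \<Rightarrow> 'a::comm_ring_1 poly) \<Rightarrow> nat \<Rightarrow> nat \<Rightarrow> nat \<Rightarrow> 'a poly" where
"pw_L e g t u v = (let r = (if t = 0 then e else u) in
   if v \<le> r \<and> r \<le> e then of_nat (r choose v) * g t ^ (r - v) else 0)"

lemma pw_value:
  assumes "n \<ge> 1" "t \<le> n" "u < pw_w n e t"
  shows "abpV n (pw_w n e) (pw_L e g) t u = Ssuf n g t ^ (if t = 0 then e else u)"
  using assms(2,3)
proof (induction "n - t" arbitrary: t u)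
  case 0 then have "t = n" "u = 0" using assms(1) by (auto simp: pw_w_def)
  then show ?case using assms(1) by (simp add: abpV_end Ssuf_def)
next
  case (Suc m)
  then have tn: "t < n" and mm: "m = n - Suc t" by auto
  define r where "r = (if t = 0 then e else u)"
  have re: "r \<le> e" using Suc.prems tn by (auto simp: r_def pw_w_def)
  define X where "X = upoly_in t (g t)"
  have St: "Ssuf n g t = X + Ssuf n g (Suc t)"
    using tn by (simp add: Ssuf_def X_def sum.atLeast_Suc_lessThan)
  have lab: "upoly_in t (pw_L e g t u v) = (if v \<le> r then of_nat (r choose v) * X ^ (r - v) else 0)" for v
    unfolding pw_L_def Let_def r_def[symmetric] using re by (auto simp: upoly_in_mult upoly_in_pow X_def)
  show ?case
  proof (cases "Suc t = n")
    case True
    then have "Ssuf n g (Suc t) = 0" by (simp add: Ssuf_def)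
    have w1: "pw_w n e (Suc t) = 1" using True by (simp add: pw_w_def)
    have "abpV n (pw_w n e) (pw_L e g) t u = upoly_in t (pw_L e g t u 0) * abpV n (pw_w n e) (pw_L e g) (Suc t) 0"
      unfolding abpV_step[OF tn] w1 by simp
    also have "\<dots> = X ^ r" unfolding True by (simp add: lab abpV_end)
    finally show ?thesis using St \<open>Ssuf n g (Suc t) = 0\<close> by (simp add: r_def)
  next
    case False
    then have tn2: "Suc t < n" using tn by simp
    have IH: "abpV n (pw_w n e) (pw_L e g) (Suc t) v = Ssuf n g (Suc t) ^ v" if "v < Suc e" for v
      using Suc.hyps(1)[OF mm, of v] tn2 that by (simp add: pw_w_def)
    have "abpV n (pw_w n e) (pw_L e g) t u =
        (\<Sum>v<Suc e. (if v \<le> r then of_nat (r choose v) * X ^ (r - v) else 0) * Ssuf n g (Suc t) ^ v)"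
      unfolding abpV_step[OF tn] using tn2 by (simp add: pw_w_def lab IH)
    also have "\<dots> = (\<Sum>v\<le>r. of_nat (r choose v) * Ssuf n g (Suc t) ^ v * X ^ (r - v))"
      by (rule sum.mono_neutral_cong_right) (use re in auto)
    also have "\<dots> = (Ssuf n g (Suc t) + X) ^ r" by (simp add: binomial_ring)
    finally show ?thesis using St by (simp add: r_def add.commute)
  qed
qed

lemma degree_pw_L: "degree (pw_L e g t u v) \<le> e * degree (g t)"
proof -
  have A: "degree (of_nat c * g t ^ k) \<le> e * degree (g t)" if "k \<le> e" for c k t
  proof -
    have "degree (of_nat c * g t ^ k) \<le> degree (g t ^ k)"
      using degree_mult_le[of "of_nat c" "g t ^ k"] by simp
    also have "\<dots> \<le> k * degree (g t)" using degree_power_le[of "g t" k] by (simp add: mult.commute)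
    also have "\<dots> \<le> e * degree (g t)" using that by simp
    finally show ?thesis .
  qed
  show ?thesis unfolding pw_L_def Let_def
    by (auto intro!: A)
qed

lemma pw_abp:
  assumes "n \<ge> 1"
  shows "good n (pw_w n e) (pw_L e g) (Suc e) (Max ((\<lambda>t. e * degree (g t)) ` {..<n}))
    \<and> abpV n (pw_w n e) (pw_L e g) 0 0 = d4_factor n g ^ e"
proof -
  have "abpV n (pw_w n e) (pw_L e g) 0 0 = d4_factor n g ^ e"
    using pw_value[OF assms, of 0 0 e g] by (simp add: pw_w_def Ssuf_def d4_factor_def atLeast0LessThan)
  moreover have "degree (pw_L e g t u v) \<le> Max ((\<lambda>t. e * degree (g t)) ` {..<n})" if "t < n" for t u v
    using degree_pw_L[of e g t u v] that by (meson Max_ge finite_imageI finite_lessThan image_eqI lessThan_iff order_trans)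
  ultimately show ?thesis using assms by (auto simp: good_def pw_w_def)
qed



lemma sum_lt_add: "(\<Sum>v<a+b. f v) = (\<Sum>v<a. f v) + (\<Sum>x<b. f (a+x::nat))"
  by (induction b) (simp_all add: add.assoc)

lemma sum_lt_mult: "(\<Sum>v<a*b. f v) = (\<Sum>y<b. \<Sum>x<a. f (x + y*a::nat))"
proof -
  have "(\<Sum>v<b*a. f v) = (\<Sum>y<b. sum f {y*a..<y*a+a})" by (rule sum.nat_group[symmetric])
  also have "\<dots> = (\<Sum>y<b. \<Sum>x<a. f (x + y*a))"
  proof (rule sum.cong[OF refl])
    fix y
    have "sum f {0 + y*a..<a + y*a} = sum (\<lambda>x. f (x + y*a)) {0..<a}"
      by (rule sum.shift_bounds_nat_ivl)
    then show "sum f {y*a..<y*a+a} = (\<Sum>x<a. f (x + y*a))"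
      by (simp add: add.commute atLeast0LessThan)
  qed
  finally show ?thesis by (simp add: mult.commute)
qed

definition tw :: "(nat\<Rightarrow>nat) \<Rightarrow> (nat\<Rightarrow>nat) \<Rightarrow> nat \<Rightarrow> nat" where
"tw w1 w2 t = w1 t * w2 t"
definition tL :: "(nat\<Rightarrow>nat) \<Rightarrow> (nat\<Rightarrow>nat\<Rightarrow>nat\<Rightarrow>'a::comm_ring_1 poly) \<Rightarrow> (nat\<Rightarrow>nat\<Rightarrow>nat\<Rightarrow>'a poly) \<Rightarrow> nat\<Rightarrow>nat\<Rightarrow>nat\<Rightarrow>'a poly" where
"tL w1 L1 L2 t u v = L1 t (u mod w1 t) (v mod w1 (Suc t)) * L2 t (u div w1 t) (v div w1 (Suc t))"

lemma tensor_value: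
  assumes pos: "\<And>t. t \<le> n \<Longrightarrow> w1 t \<ge> 1" and "t \<le> n"
  shows "abpV n (tw w1 w2) (tL w1 L1 L2) t u = abpV n w1 L1 t (u mod w1 t) * abpV n w2 L2 t (u div w1 t)"
  using assms(2)
proof (induction "n - t" arbitrary: t u)
  case 0
  then have tn: "t = n" by simp
  have "w1 n \<ge> 1" using pos by simp
  then have "(u = 0) = (u mod w1 n = 0 \<and> u div w1 n = 0)"
    by (metis div_0 div_mult_mod_eq mod_0 mult_0_right add_0)
  then show ?case using tn by (simp add: abpV_end)
next
  case (Suc m)
  then have tn: "t < n" and mm: "m = n - Suc t" by auto
  define a where "a = w1 (Suc t)"
  define b where "b = w2 (Suc t)"
  have a1: "a \<ge> 1" using pos tn by (simp add: a_def Suc_leI)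
  have md: "(x + y*a) mod a = x" "(x + y*a) div a = y" if "x < a" for x y
    using that a1 by auto
  have IH: "abpV n (tw w1 w2) (tL w1 L1 L2) (Suc t) v = abpV n w1 L1 (Suc t) (v mod a) * abpV n w2 L2 (Suc t) (v div a)" for v
    using Suc.hyps(1)[OF mm] tn by (simp add: a_def Suc_leI)
  define u1 where "u1 = u mod w1 t"
  define u2 where "u2 = u div w1 t"
  have "abpV n (tw w1 w2) (tL w1 L1 L2) t u =
      (\<Sum>v<a*b. upoly_in t (L1 t u1 (v mod a) * L2 t u2 (v div a)) * (abpV n w1 L1 (Suc t) (v mod a) * abpV n w2 L2 (Suc t) (v div a)))"
    unfolding abpV_step[OF tn] IH by (simp add: tw_def tL_def a_def b_def u1_def u2_def)
  also have "\<dots> = (\<Sum>y<b. \<Sum>x<a. (upoly_in t (L1 t u1 x) * abpV n w1 L1 (Suc t) x) * (upoly_in t (L2 t u2 y) * abpV n w2 L2 (Suc t) y))"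
    unfolding sum_lt_mult by (rule sum.cong[OF refl], rule sum.cong[OF refl]) (simp add: md upoly_in_mult mult.assoc mult.left_commute)
  also have "\<dots> = (\<Sum>x<a. upoly_in t (L1 t u1 x) * abpV n w1 L1 (Suc t) x) * (\<Sum>y<b. upoly_in t (L2 t u2 y) * abpV n w2 L2 (Suc t) y)"
    by (simp add: sum_product sum.swap[of _ "{..<b}"])
  also have "\<dots> = abpV n w1 L1 t u1 * abpV n w2 L2 t u2"
    unfolding abpV_step[OF tn] a_def b_def by simp
  finally show ?case by (simp add: u1_def u2_def)
qed

lemma tensor_abp:
  assumes "good n w1 L1 B1 D1" "good n w2 L2 B2 D2"
  shows "good n (tw w1 w2) (tL w1 L1 L2) (B1*B2) (D1+D2)
    \<and> abpV n (tw w1 w2) (tL w1 L1 L2) 0 0 = abpV n w1 L1 0 0 * abpV n w2 L2 0 0"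
proof -
  have pos: "\<And>t. t \<le> n \<Longrightarrow> w1 t \<ge> 1" using assms(1) by (simp add: good_def)
  have v: "abpV n (tw w1 w2) (tL w1 L1 L2) 0 0 = abpV n w1 L1 0 0 * abpV n w2 L2 0 0"
    using tensor_value[of n w1 0 w2 L1 L2 0] pos by simp
  have d: "degree (tL w1 L1 L2 t u v) \<le> D1 + D2" if "t < n" for t u v
    using assms that unfolding good_def tL_def
    by (meson add_mono degree_mult_le order_trans)
  have w: "1 \<le> tw w1 w2 t \<and> tw w1 w2 t \<le> B1*B2" if "t \<le> n" for t
    using assms that unfolding good_def tw_def by (simp add: mult_le_mono)
  show ?thesis using v d w assms unfolding good_def by (simp add: tw_def)
qed

definition mid :: "nat \<Rightarrow> nat \<Rightarrow> bool" where "mid n t = (0 < t \<and> t < n)"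
definition sw :: "nat \<Rightarrow> (nat\<Rightarrow>nat) \<Rightarrow> (nat\<Rightarrow>nat) \<Rightarrow> nat \<Rightarrow> nat" where
"sw n w1 w2 t = (if mid n t then w1 t + w2 t else 1)"
definition in1 :: "nat \<Rightarrow> (nat\<Rightarrow>nat) \<Rightarrow> nat \<Rightarrow> nat \<Rightarrow> bool" where
"in1 n w1 t u = (if mid n t then u < w1 t else u = 0)"
definition in2 :: "nat \<Rightarrow> (nat\<Rightarrow>nat) \<Rightarrow> nat \<Rightarrow> nat \<Rightarrow> bool" where
"in2 n w1 t u = (if mid n t then w1 t \<le> u else u = 0)"
definition lc2 :: "nat \<Rightarrow> (nat\<Rightarrow>nat) \<Rightarrow> nat \<Rightarrow> nat \<Rightarrow> nat" where
"lc2 n w1 t u = (if mid n t then u - w1 t else u)"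
definition sL :: "nat \<Rightarrow> (nat\<Rightarrow>nat) \<Rightarrow> (nat\<Rightarrow>nat\<Rightarrow>nat\<Rightarrow>'a::comm_ring_1 poly) \<Rightarrow> (nat\<Rightarrow>nat\<Rightarrow>nat\<Rightarrow>'a poly) \<Rightarrow> nat\<Rightarrow>nat\<Rightarrow>nat\<Rightarrow>'a poly" where
"sL n w1 L1 L2 t u v = (if in1 n w1 t u \<and> in1 n w1 (Suc t) v then L1 t u v else 0)
   + (if in2 n w1 t u \<and> in2 n w1 (Suc t) v then L2 t (lc2 n w1 t u) (lc2 n w1 (Suc t) v) else 0)"

lemma upoly_in_if: "upoly_in t (if P then a else 0) = (if P then upoly_in t a else 0)"
  by simp

lemma sum_value:
  assumes w1n: "w1 n = 1" and w2n: "w2 n = 1" and "t < n"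
  shows "abpV n (sw n w1 w2) (sL n w1 L1 L2) t u =
     (if in1 n w1 t u then abpV n w1 L1 t u else 0) + (if in2 n w1 t u then abpV n w2 L2 t (lc2 n w1 t u) else 0)"
  using assms(3)
proof (induction "n - Suc t" arbitrary: t u)
  case 0
  then have tn: "Suc t = n" by simp
  have e1: "in1 n w1 (Suc t) 0" "in2 n w1 (Suc t) 0" "lc2 n w1 (Suc t) 0 = 0" "sw n w1 w2 (Suc t) = 1"
    using tn by (auto simp: in1_def in2_def lc2_def mid_def sw_def)
  have "abpV n (sw n w1 w2) (sL n w1 L1 L2) t u = upoly_in t (sL n w1 L1 L2 t u 0)"
    unfolding abpV_step[OF 0(2)] e1 by (simp add: tn abpV_end)
  moreover have "abpV n w1 L1 t u = upoly_in t (L1 t u 0)"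
    unfolding abpV_step[OF 0(2)] using w1n by (simp add: tn abpV_end)
  moreover have "abpV n w2 L2 t x = upoly_in t (L2 t x 0)" for x
    unfolding abpV_step[OF 0(2)] using w2n by (simp add: tn abpV_end)
  moreover have "upoly_in t (sL n w1 L1 L2 t u 0) = (if in1 n w1 t u then upoly_in t (L1 t u 0) else 0)
     + (if in2 n w1 t u then upoly_in t (L2 t (lc2 n w1 t u) 0) else 0)"
    by (simp add: sL_def e1 upoly_in_add)
  ultimately show ?case by simp
next
  case (Suc m)
  then have tn: "t < n" and tn2: "Suc t < n" and mm: "m = n - Suc (Suc t)" by auto
  define a where "a = w1 (Suc t)"
  define b where "b = w2 (Suc t)"
  have md: "mid n (Suc t)" using tn2 by (simp add: mid_def)
  have IH: "abpV n (sw n w1 w2) (sL n w1 L1 L2) (Suc t) v =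
     (if in1 n w1 (Suc t) v then abpV n w1 L1 (Suc t) v else 0) + (if in2 n w1 (Suc t) v then abpV n w2 L2 (Suc t) (lc2 n w1 (Suc t) v) else 0)" for v
    using Suc.hyps(1)[OF mm tn2] .
  have sw1: "sw n w1 w2 (Suc t) = a + b" using md by (simp add: sw_def a_def b_def)
  have A: "v < a \<Longrightarrow> in1 n w1 (Suc t) v \<and> \<not> in2 n w1 (Suc t) v" for v
    using md by (simp add: in1_def in2_def a_def)
  have B: "in2 n w1 (Suc t) (a + x) \<and> \<not> in1 n w1 (Suc t) (a + x) \<and> lc2 n w1 (Suc t) (a+x) = x" for x
    using md by (simp add: in1_def in2_def lc2_def a_def)
  have "abpV n (sw n w1 w2) (sL n w1 L1 L2) t u =
     (\<Sum>v<a. upoly_in t (sL n w1 L1 L2 t u v) * abpV n (sw n w1 w2) (sL n w1 L1 L2) (Suc t) v)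
     + (\<Sum>x<b. upoly_in t (sL n w1 L1 L2 t u (a+x)) * abpV n (sw n w1 w2) (sL n w1 L1 L2) (Suc t) (a+x))"
    unfolding abpV_step[OF tn] sw1 sum_lt_add ..
  also have "\<dots> = (if in1 n w1 t u then (\<Sum>v<a. upoly_in t (L1 t u v) * abpV n w1 L1 (Suc t) v) else 0)
     + (if in2 n w1 t u then (\<Sum>x<b. upoly_in t (L2 t (lc2 n w1 t u) x) * abpV n w2 L2 (Suc t) x) else 0)"
  proof -
    have "(\<Sum>v<a. upoly_in t (sL n w1 L1 L2 t u v) * abpV n (sw n w1 w2) (sL n w1 L1 L2) (Suc t) v)
       = (\<Sum>v<a. (if in1 n w1 t u then upoly_in t (L1 t u v) * abpV n w1 L1 (Suc t) v else 0))"
      by (rule sum.cong[OF refl]) (simp add: A IH sL_def upoly_in_add)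
    moreover have "(\<Sum>x<b. upoly_in t (sL n w1 L1 L2 t u (a+x)) * abpV n (sw n w1 w2) (sL n w1 L1 L2) (Suc t) (a+x))
       = (\<Sum>x<b. (if in2 n w1 t u then upoly_in t (L2 t (lc2 n w1 t u) x) * abpV n w2 L2 (Suc t) x else 0))"
      by (rule sum.cong[OF refl]) (simp add: B IH sL_def upoly_in_add)
    ultimately show ?thesis by simp
  qed
  also have "\<dots> = (if in1 n w1 t u then abpV n w1 L1 t u else 0) + (if in2 n w1 t u then abpV n w2 L2 t (lc2 n w1 t u) else 0)"
    unfolding abpV_step[OF tn] a_def b_def ..
  finally show ?case .
qed

lemma sum_abp:
  assumes "n \<ge> 1" "good n w1 L1 B1 D1" "good n w2 L2 B2 D2"
  shows "good n (sw n w1 w2) (sL n w1 L1 L2) (B1+B2) (max D1 D2)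
    \<and> abpV n (sw n w1 w2) (sL n w1 L1 L2) 0 0 = abpV n w1 L1 0 0 + abpV n w2 L2 0 0"
proof -
  have v: "abpV n (sw n w1 w2) (sL n w1 L1 L2) 0 0 = abpV n w1 L1 0 0 + abpV n w2 L2 0 0"
    using sum_value[of w1 n w2 0 L1 L2 0] assms unfolding good_def
    by (simp add: in1_def in2_def lc2_def mid_def)
  have d: "degree (sL n w1 L1 L2 t u v) \<le> max D1 D2" if "t < n" for t u v
  proof -
    have "degree (L1 t u v) \<le> max D1 D2" "degree (L2 t (lc2 n w1 t u) (lc2 n w1 (Suc t) v)) \<le> max D1 D2"
      using assms(2,3) that unfolding good_def by (meson max.coboundedI1 max.coboundedI2)+
    then show ?thesis unfolding sL_def
      by (auto intro: order_trans[OF degree_add_le])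
  qed
  have w: "1 \<le> sw n w1 w2 t \<and> sw n w1 w2 t \<le> B1+B2" if "t \<le> n" for t
    using assms that unfolding good_def sw_def by (auto simp: add_le_mono trans_le_add1)
  show ?thesis using v d w assms unfolding good_def by (simp add: sw_def mid_def)
qed



lemma single_single_eq: "(Poly_Mapping.single m d = Poly_Mapping.single t (D::nat)) \<longleftrightarrow> (if D = 0 then d = 0 else m = t \<and> d = D)"
  by (metis lookup_single_eq lookup_single_not_eq single_zero)

lemma lookup_upoly_in_single:
  assumes "D > 0"
  shows "Poly_Mapping.lookup (upoly_in m p) (Poly_Mapping.single t D) = (if m = t then coeff p D else 0)"
proof -
  have "Poly_Mapping.lookup (upoly_in m p) (Poly_Mapping.single t D) =
     (\<Sum>d\<le>degree p. if m = t \<and> d = D then coeff p d else 0)"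
    unfolding upoly_in_def lookup_sum lookup_single using assms
    by (intro sum.cong) (auto simp: when_def single_single_eq)
  also have "\<dots> = (if m = t then coeff p D else 0)"
    by (cases "m = t") (auto simp: coeff_eq_0 not_le)
  finally show ?thesis .
qed

lemma deg_le_mdeg:
  assumes "t < n"
  shows "degree (g t) \<le> mdeg (d4_factor n g)"
proof (cases "degree (g t) = 0")
  case True then show ?thesis by simp
next
  case False
  define D where "D = degree (g t)"
  have D0: "D > 0" using False D_def by simp
  have "Poly_Mapping.lookup (d4_factor n g) (Poly_Mapping.single t D) = (\<Sum>m<n. if m = t then coeff (g m) D else 0)"
    unfolding d4_factor_def lookup_sum by (simp add: lookup_upoly_in_single[OF D0])
  also have "\<dots> = coeff (g t) D" using assms by simp
  also have "\<dots> \<noteq> 0" using D0 unfolding D_def by (metis leading_coeff_0_iff less_numeral_extra(3) degree_0)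
  finally have k: "Poly_Mapping.single t D \<in> Poly_Mapping.keys (d4_factor n g)" by (simp add: in_keys_iff)
  have s: "(\<Sum>v\<in>Poly_Mapping.keys (Poly_Mapping.single t D). Poly_Mapping.lookup (Poly_Mapping.single t D) v) = D"
    using D0 by simp
  show ?thesis unfolding mdeg_def D_def[symmetric]
    by (rule Max_ge) (use k s in force)+
qed

lemma good_mono: "good n w L B D \<Longrightarrow> B \<le> B' \<Longrightarrow> D \<le> D' \<Longrightarrow> good n w L B' D'"
  unfolding good_def by (meson order_trans)

lemma psi_abp:
  fixes Psi :: "(nat \<times> (nat \<Rightarrow> 'a::comm_ring_1 poly)) list"
  assumes n1: "n \<ge> 1"
  shows "\<exists>w L. good n w L (exp_prod Psi) (\<Sum>(e,g)\<leftarrow>Psi. e * mdeg (d4_factor n g))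
     \<and> abpV n w L 0 0 = (\<Prod>(e,g)\<leftarrow>Psi. d4_factor n g ^ e)"
proof (induction Psi)
  case Nil
  then show ?case using const_abp[OF n1] by (auto simp: exp_prod_def)
next
  case (Cons eg Psi)
  obtain e g where eg: "eg = (e, g)" by (cases eg)
  obtain w2 L2 where 2: "good n w2 L2 (exp_prod Psi) (\<Sum>(e,g)\<leftarrow>Psi. e * mdeg (d4_factor n g))"
     "abpV n w2 L2 0 0 = (\<Prod>(e,g)\<leftarrow>Psi. d4_factor n g ^ e)" using Cons by blast
  have mx: "Max ((\<lambda>t. e * degree (g t)) ` {..<n}) \<le> e * mdeg (d4_factor n g)"
  proof (subst Max_le_iff)
    show "finite ((\<lambda>t. e * degree (g t)) ` {..<n})" by simp
    show "(\<lambda>t. e * degree (g t)) ` {..<n} \<noteq> {}" using n1 by (auto simp: lessThan_empty_iff)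
    show "\<forall>a\<in>(\<lambda>t. e * degree (g t)) ` {..<n}. a \<le> e * mdeg (d4_factor n g)"
      using deg_le_mdeg[of _ n g] by auto
  qed
  have 1: "good n (pw_w n e) (pw_L e g) (Suc e) (e * mdeg (d4_factor n g))"
     "abpV n (pw_w n e) (pw_L e g) 0 0 = d4_factor n g ^ e"
    using pw_abp[OF n1, of e g] good_mono[OF _ order.refl mx] by blast+
  have "exp_prod (eg # Psi) = Suc e * exp_prod Psi" by (simp add: exp_prod_def eg)
  then show ?case using tensor_abp[OF 1(1) 2(1)] 1(2) 2(2) eg by auto
qed

definition psi_deg :: "nat \<Rightarrow> (nat \<times> (nat \<Rightarrow> 'a::comm_ring_1 poly)) list \<Rightarrow> nat" where
"psi_deg n Psi = (\<Sum>(e,g)\<leftarrow>Psi. e * mdeg (d4_factor n g))"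

lemma circ_abp:
  fixes C :: "'a::comm_ring_1 d4circuit"
  assumes n1: "n \<ge> 1"
  shows "C \<noteq> [] \<Longrightarrow> (\<forall>Psi\<in>set C. exp_prod Psi \<le> M \<and> psi_deg n Psi \<le> D) \<Longrightarrow>
    \<exists>w L. good n w L (length C * M) D \<and> abpV n w L 0 0 = d4_eval n C"
proof (induction C)
  case Nil then show ?case by simp
next
  case (Cons Psi C)
  obtain w1 L1 where 1: "good n w1 L1 (exp_prod Psi) (psi_deg n Psi)"
     "abpV n w1 L1 0 0 = (\<Prod>(e,g)\<leftarrow>Psi. d4_factor n g ^ e)"
    using psi_abp[OF n1, of Psi] unfolding psi_deg_def by blast
  have h1': "good n w1 L1 M D" using good_mono[OF 1(1)] Cons.prems(2) by simp
  have ev: "d4_eval n (Psi # C) = (\<Prod>(e,g)\<leftarrow>Psi. d4_factor n g ^ e) + d4_eval n C"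
    by (simp add: d4_eval_def)
  show ?case
  proof (cases "C = []")
    case True
    then show ?thesis using h1' 1(2) ev by (auto simp: d4_eval_def)
  next
    case False
    obtain w2 L2 where 2: "good n w2 L2 (length C * M) D" "abpV n w2 L2 0 0 = d4_eval n C"
      using Cons.IH[OF False] Cons.prems(2) by auto
    show ?thesis using sum_abp[OF n1 h1' 2(1)] 1(2) 2(2) ev by auto
  qed
qed



theorem lemma5p5:
  fixes n :: nat and C :: "'a::field d4circuit"
  assumes "n \<ge> 1" and "C \<noteq> []"
  shows "\<exists>w L. w 0 = 1 \<and> w n = 1
    \<and> abp_eval n w L = d4_eval n C
    \<and> abp_width n w \<le> length C * d4_max_exp_prod C
    \<and> (\<forall>j<n. \<forall>u v. degree (L j u v) \<le> d4_sdeg n C)"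
proof -
  have "\<forall>Psi\<in>set C. exp_prod Psi \<le> d4_max_exp_prod C \<and> psi_deg n Psi \<le> d4_sdeg n C"
  proof
    fix Psi assume P: "Psi \<in> set C"
    have "exp_prod Psi \<le> d4_max_exp_prod C" unfolding d4_max_exp_prod_def
      by (rule Max_ge) (use P in auto)
    moreover have "psi_deg n Psi \<le> d4_sdeg n C" unfolding d4_sdeg_def psi_deg_def
      by (rule Max_ge) (use P in auto)
    ultimately show "exp_prod Psi \<le> d4_max_exp_prod C \<and> psi_deg n Psi \<le> d4_sdeg n C" ..
  qed
  then obtain w L where g: "good n w L (length C * d4_max_exp_prod C) (d4_sdeg n C)"
    and v: "abpV n w L 0 0 = d4_eval n C"
    using circ_abp[OF assms(1) assms(2)] by blast
  have w0: "w 0 = 1" "w n = 1" using g by (auto simp: good_def)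
  have "abp_eval n w L = d4_eval n C" using abp_eval_V[of w n L] w0 v by simp
  moreover have "abp_width n w \<le> length C * d4_max_exp_prod C"
    unfolding abp_width_def using g by (subst Max_le_iff) (auto simp: good_def)
  moreover have "\<forall>j<n. \<forall>u v. degree (L j u v) \<le> d4_sdeg n C" using g by (simp add: good_def)
  ultimately show ?thesis using w0 by blast
qed

end
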